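(* Let $X$ and $\Lambda$ be nonempty sets, $f: X\to\mathbb{R}$, and for each $\lambda\in\Lambda$ let $f_\lambda: X\to\mathbb{R}$, such that the feasible set $X_0:=\{x\in X:\ \sup_{\lambda\in\Lambda}f_\lambda(x)\le0\}$ is nonempty, $x^0\in X_0$ satisfies $f(x^0)=\inf_{x\in X_0}f(x)$, and $(f_\lambda(x))_{\lambda\in\Lambda}\in\ell^\infty(\Lambda)$ for every $x\in X$. Then there exist $\rho\ge0$ and $\Phi_0\in\ell^\infty(\Lambda)^*_+$ with $\rho+\Phi_0(\mathbf{1})=1$ such that the function $x\mapsto\rho f(x)+\Phi_0((f_\lambda(x))_{\lambda\in\Lambda})$ attains its infimum on $X$ at $x^0$ and $\Phi_0((f_\lambda(x^0))_{\lambda\in\Lambda})=0$, if and only if the family $(f_\lambda)_{\lambda\in\Lambda}\cup(f-f(x^0))$ is infsup-convex on $X$.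
   Context: $\ell^\infty(\Lambda)$ is the Banach space of bounded real functions on $\Lambda$ (sup-norm), $\ell^\infty(\Lambda)^*_+$ the cone of positive continuous linear functionals on it, and $\mathbf{1}$ the constant function $1$ on $\Lambda$. The family $(f_\lambda)_{\lambda\in\Lambda}\cup(f-f(x^0))$ is the family indexed by $\Lambda\cup\{\mu\}$ ($\mu\notin\Lambda$) whose $\mu$-th member is $f-f(x^0)$. With $\Delta_m:=\{\mathbf t\in\mathbb{R}^m: t_j\ge0,\sum t_j=1\}$, a family $(g_i)_{i\in I}$ of real functions on $X$ is infsup-convex on $X$ if for all $m\ge1$, $\mathbf{t}\in\Delta_m$, $x_1,\dots,x_m\in X$: $\inf_{x\in X}\sup_{i\in I}g_i(x)\le\sup_{i\in I}\sum_{j=1}^m t_j g_i(x_j)$. *)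

theory Defs
  imports "HOL-Analysis.Analysis"
begin

text \<open>The index set Lambda is modelled by a type 'l (automatically nonempty).
  l-infinity(Lambda): bounded real functions on Lambda.\<close>
definition linfty :: "('l \<Rightarrow> real) set" where
  "linfty = {g. bounded (range g)}"

definition pos_dual :: "(('l \<Rightarrow> real) \<Rightarrow> real) set" where
  "pos_dual = {\<Phi>.
     (\<forall>g\<in>linfty. \<forall>h\<in>linfty. \<Phi> (\<lambda>l. g l + h l) = \<Phi> g + \<Phi> h) \<and>
     (\<forall>c. \<forall>g\<in>linfty. \<Phi> (\<lambda>l. c * g l) = c * \<Phi> g) \<and>
     (\<exists>C. \<forall>g\<in>linfty. \<bar>\<Phi> g\<bar> \<le> C * (SUP l. \<bar>g l\<bar>)) \<and>
     (\<forall>g\<in>linfty. (\<forall>l. 0 \<le> g l) \<longrightarrow> 0 \<le> \<Phi> g)}"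

text \<open>Infsup-convexity of a family (g_i) indexed by I on X; infima/suprema
  are taken in the extended reals so that unbounded cases are handled as in the paper.\<close>
definition infsup_convex :: "'x set \<Rightarrow> 'i set \<Rightarrow> ('i \<Rightarrow> 'x \<Rightarrow> real) \<Rightarrow> bool" where
  "infsup_convex X I g \<longleftrightarrow>
     (\<forall>m::nat. \<forall>t::nat \<Rightarrow> real. \<forall>xs::nat \<Rightarrow> 'x.
        m \<ge> 1 \<and> (\<forall>j<m. 0 \<le> t j) \<and> (\<Sum>j<m. t j) = 1 \<and> (\<forall>j<m. xs j \<in> X) \<longrightarrow>
        (INF x\<in>X. SUP i\<in>I. ereal (g i x)) \<le> (SUP i\<in>I. ereal (\<Sum>j<m. t j * g i (xs j))))"

definition feasible_set :: "'x set \<Rightarrow> ('l \<Rightarrow> 'x \<Rightarrow> real) \<Rightarrow> 'x set" where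
  "feasible_set X F = {x\<in>X. (SUP l. F l x) \<le> 0}"

text \<open>The family (f_lambda) together with f - f(x0), indexed by 'l option (None = mu).\<close>
definition ext_family :: "('l \<Rightarrow> 'x \<Rightarrow> real) \<Rightarrow> ('x \<Rightarrow> real) \<Rightarrow> 'x \<Rightarrow> 'l option \<Rightarrow> 'x \<Rightarrow> real" where
  "ext_family F f x0 = (\<lambda>i x. case i of None \<Rightarrow> f x - f x0 | Some l \<Rightarrow> F l x)"

end

theory Submission imports Defs begin
definition sublin :: "('i\<Rightarrow>real) set \<Rightarrow> (('i\<Rightarrow>real)\<Rightarrow>real) \<Rightarrow> bool" where
 "sublin U r \<longleftrightarrow> (\<forall>a\<in>U. \<forall>b\<in>U. r (\<lambda>i. a i + b i) \<le> r a + r b) \<and>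
     (\<forall>c>0. \<forall>a\<in>U. r (\<lambda>i. c * a i) = c * r a)"

locale vsub =
  fixes U :: "('i\<Rightarrow>real) set"
  assumes add: "a\<in>U \<Longrightarrow> b\<in>U \<Longrightarrow> (\<lambda>i. a i + b i) \<in> U"
    and scal: "a\<in>U \<Longrightarrow> (\<lambda>i. c * a i) \<in> U"
    and zero: "(\<lambda>_. 0) \<in> U"
begin

lemma neg: "a\<in>U \<Longrightarrow> (\<lambda>i. - a i) \<in> U"
  using scal[of a "-1"] by simp

lemma sublin_zero: assumes "sublin U r" shows "r (\<lambda>_. 0) = 0"
proof -
  from assms have "\<forall>c>0. \<forall>a\<in>U. r (\<lambda>i. c * a i) = c * r a" unfolding sublin_def by (rule conjunct2)
  hence H: "\<And>c a. c > 0 \<Longrightarrow> a \<in> U \<Longrightarrow> r (\<lambda>i. c * a i) = c * r a" by blast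
  have "r (\<lambda>_. 0) = 2 * r (\<lambda>_. 0)" using H[of 2 "\<lambda>_. 0"] zero by simp
  thus ?thesis by linarith
qed

lemma sublin_addD: assumes "sublin U r" "a\<in>U" "b\<in>U" shows "r (\<lambda>i. a i + b i) \<le> r a + r b"
proof -
  from assms(1) have "\<forall>a\<in>U. \<forall>b\<in>U. r (\<lambda>i. a i + b i) \<le> r a + r b" unfolding sublin_def by (rule conjunct1)
  thus ?thesis using assms(2,3) by blast
qed

lemma sublin_homD: assumes "sublin U r" "a\<in>U" "c > 0" shows "r (\<lambda>i. c * a i) = c * r a"
proof -
  from assms(1) have "\<forall>c>0. \<forall>a\<in>U. r (\<lambda>i. c * a i) = c * r a" unfolding sublin_def by (rule conjunct2)
  thus ?thesis using assms(2,3) by blast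
qed

lemma sublin_neg: assumes "sublin U r" "a\<in>U" shows "0 \<le> r a + r (\<lambda>i. - a i)"
proof -
  have "r (\<lambda>i. a i + - a i) \<le> r a + r (\<lambda>i. - a i)" by (rule sublin_addD[OF assms(1,2) neg[OF assms(2)]])
  thus ?thesis using sublin_zero[OF assms(1)] by simp
qed

lemma sublin_lower: assumes "sublin U r" "a\<in>U" shows "- r (\<lambda>i. - a i) \<le> r a"
  using sublin_neg[OF assms] by linarith

lemma sublin_hom0: assumes "sublin U r" "a\<in>U" "c \<ge> 0" shows "r (\<lambda>i. c * a i) = c * r a"
proof (cases "c = 0")
  case True thus ?thesis using sublin_zero[OF assms(1)] by simp
next
  case False thus ?thesis using sublin_homD[OF assms(1,2)] assms(3) by simp
qed

lemma minimal_odd: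
  assumes m: "sublin U m"
    and mn: "\<And>r. sublin U r \<Longrightarrow> (\<forall>h\<in>U. r h \<le> m h) \<Longrightarrow> (\<forall>h\<in>U. r h = m h)"
    and aU: "a \<in> U"
  shows "m (\<lambda>i. - a i) = - m a"
proof -
  define E where "E h = {m (\<lambda>i. h i + t * a i) - t * m a | t. t \<ge> 0}" for h
  define r where "r h = Inf (E h)" for h
  have lb: "- m (\<lambda>i. - h i) \<le> m (\<lambda>i. h i + t * a i) - t * m a" if "h\<in>U" "t\<ge>0" for h t
  proof -
    have "m (\<lambda>i. (h i + t * a i) + - h i) \<le> m (\<lambda>i. h i + t * a i) + m (\<lambda>i. - h i)"
      by (rule sublin_addD[OF m add[OF that(1) scal[OF aU]] neg[OF that(1)]])
    moreover have "(\<lambda>i. (h i + t * a i) + - h i) = (\<lambda>i. t * a i)" by simp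
    ultimately show ?thesis using sublin_hom0[OF m aU that(2)] by simp
  qed
  have ne: "E h \<noteq> {}" for h unfolding E_def by auto
  have bdd: "bdd_below (E h)" if "h\<in>U" for h
    unfolding E_def bdd_below_def using lb[OF that] by blast
  have elem: "r h \<le> m (\<lambda>i. h i + t * a i) - t * m a" if "h\<in>U" "t\<ge>0" for h t
    unfolding r_def by (rule cInf_lower[OF _ bdd[OF that(1)]]) (use that in \<open>auto simp: E_def\<close>)
  have great: "y \<le> r h" if "h\<in>U" "\<And>t. t \<ge> 0 \<Longrightarrow> y \<le> m (\<lambda>i. h i + t * a i) - t * m a" for h y
    unfolding r_def by (rule cInf_greatest[OF ne]) (use that in \<open>auto simp: E_def\<close>)
  have rle: "r h \<le> m h" if "h\<in>U" for h using elem[OF that, of 0] by simp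
  have sub: "r (\<lambda>i. h1 i + h2 i) \<le> r h1 + r h2" if "h1\<in>U" "h2\<in>U" for h1 h2
  proof -
    have A: "r (\<lambda>i. h1 i + h2 i) \<le> (m (\<lambda>i. h1 i + t1 * a i) - t1 * m a) + (m (\<lambda>i. h2 i + t2 * a i) - t2 * m a)"
      if "t1 \<ge> 0" "t2 \<ge> 0" for t1 t2
    proof -
      have "r (\<lambda>i. h1 i + h2 i) \<le> m (\<lambda>i. (h1 i + h2 i) + (t1+t2) * a i) - (t1+t2) * m a"
        using elem[OF add[OF \<open>h1\<in>U\<close> \<open>h2\<in>U\<close>]] that by simp
      moreover have "(\<lambda>i. (h1 i + h2 i) + (t1+t2) * a i) = (\<lambda>i. (h1 i + t1 * a i) + (h2 i + t2 * a i))"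
        by (simp add: algebra_simps)
      moreover have "m (\<lambda>i. (h1 i + t1 * a i) + (h2 i + t2 * a i)) \<le> m (\<lambda>i. h1 i + t1 * a i) + m (\<lambda>i. h2 i + t2 * a i)"
        by (rule sublin_addD[OF m]) (use that aU \<open>h1\<in>U\<close> \<open>h2\<in>U\<close> add scal in auto)
      ultimately show ?thesis by (simp add: algebra_simps)
    qed
    have "r (\<lambda>i. h1 i + h2 i) - (m (\<lambda>i. h2 i + t2 * a i) - t2 * m a) \<le> r h1" if "t2\<ge>0" for t2
    proof (rule great[OF \<open>h1\<in>U\<close>])
      fix t1 :: real assume "t1 \<ge> 0"
      from A[OF this that] show "r (\<lambda>i. h1 i + h2 i) - (m (\<lambda>i. h2 i + t2 * a i) - t2 * m a) \<le> m (\<lambda>i. h1 i + t1 * a i) - t1 * m a"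
        by linarith
    qed
    hence "r (\<lambda>i. h1 i + h2 i) - r h1 \<le> r h2"
    proof (intro great[OF \<open>h2\<in>U\<close>])
      fix t2 :: real assume "t2 \<ge> 0"
      assume H: "\<And>t2. 0 \<le> t2 \<Longrightarrow> r (\<lambda>i. h1 i + h2 i) - (m (\<lambda>i. h2 i + t2 * a i) - t2 * m a) \<le> r h1"
      from H[OF \<open>t2 \<ge> 0\<close>] show "r (\<lambda>i. h1 i + h2 i) - r h1 \<le> m (\<lambda>i. h2 i + t2 * a i) - t2 * m a" by linarith
    qed
    thus ?thesis by simp
  qed
  have hom: "r (\<lambda>i. c * h i) = c * r h" if "c > 0" "h\<in>U" for c h
  proof (rule antisym)
    have "r (\<lambda>i. c * h i) / c \<le> r h"
    proof (rule great[OF \<open>h\<in>U\<close>])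
      fix s :: real assume s: "s \<ge> 0"
      have "r (\<lambda>i. c * h i) \<le> m (\<lambda>i. c * h i + (c * s) * a i) - (c * s) * m a"
        using elem[of "\<lambda>i. c * h i" "c * s"] scal[OF \<open>h\<in>U\<close>] s that by simp
      also have "(\<lambda>i. c * h i + (c * s) * a i) = (\<lambda>i. c * (h i + s * a i))" by (simp add: algebra_simps)
      also have "m (\<lambda>i. c * (h i + s * a i)) = c * m (\<lambda>i. h i + s * a i)"
        by (rule sublin_hom0[OF m add[OF \<open>h\<in>U\<close> scal[OF aU]]]) (use that in simp)
      finally show "r (\<lambda>i. c * h i) / c \<le> m (\<lambda>i. h i + s * a i) - s * m a"
        using that by (simp add: field_simps)
    qed
    thus "r (\<lambda>i. c * h i) \<le> c * r h" using that by (simp add: field_simps)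
    have "r h \<le> r (\<lambda>i. c * h i) / c"
    proof -
      have "r (\<lambda>i. c * h i) \<ge> c * r h"
      proof (rule great[OF scal[OF \<open>h\<in>U\<close>]])
        fix t :: real assume t: "t \<ge> 0"
        have "r h \<le> m (\<lambda>i. h i + (t/c) * a i) - (t/c) * m a" using elem[OF \<open>h\<in>U\<close>, of "t/c"] t that by simp
        hence "c * r h \<le> c * m (\<lambda>i. h i + (t/c) * a i) - t * m a" using that by (simp add: field_simps)
        also have "c * m (\<lambda>i. h i + (t/c) * a i) = m (\<lambda>i. c * (h i + (t/c) * a i))"
          by (rule sublin_hom0[OF m add[OF \<open>h\<in>U\<close> scal[OF aU]], symmetric]) (use that in simp)
        also have "(\<lambda>i. c * (h i + (t/c) * a i)) = (\<lambda>i. c * h i + t * a i)" using that by (simp add: distrib_left)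
        finally show "c * r h \<le> m (\<lambda>i. c * h i + t * a i) - t * m a" .
      qed
      thus ?thesis using that by (simp add: field_simps)
    qed
    thus "c * r h \<le> r (\<lambda>i. c * h i)" using that by (simp add: field_simps)
  qed
  have "sublin U r" unfolding sublin_def using sub hom by blast
  hence eq: "\<forall>h\<in>U. r h = m h" using mn rle by blast
  have "m (\<lambda>i. - a i) \<le> m (\<lambda>i. - a i + 1 * a i) - 1 * m a"
    using elem[OF neg[OF aU], of 1] eq neg[OF aU] by simp
  hence "m (\<lambda>i. - a i) \<le> - m a" using sublin_zero[OF m] by simp
  thus ?thesis using sublin_neg[OF m aU] by simp
qed

lemma sublin_restrict: "sublin U r \<Longrightarrow> sublin U (\<lambda>h. if h \<in> U then r h else 0)"
  unfolding sublin_def using add scal by auto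

lemma exists_minimal:
  assumes q: "sublin U q"
  shows "\<exists>m. sublin U m \<and> (\<forall>h\<in>U. m h \<le> q h) \<and>
     (\<forall>r. sublin U r \<longrightarrow> (\<forall>h\<in>U. r h \<le> m h) \<longrightarrow> (\<forall>h\<in>U. r h = m h))"
proof -
  define A where "A = {r. sublin U r \<and> (\<forall>h\<in>U. r h \<le> q h) \<and> (\<forall>h. h\<notin>U \<longrightarrow> r h = 0)}"
  define P where "P r1 r2 = (\<forall>h. r2 h \<le> (r1 h::real))" for r1 r2 :: "('i\<Rightarrow>real)\<Rightarrow>real"
  have po: "partial_order_on A (relation_of P A)"
    unfolding partial_order_on_def preorder_on_def refl_on_def trans_on_def antisym_on_def relation_of_def P_def
    by (auto intro: order_trans antisym simp: fun_eq_iff)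
  have lowq: "- q (\<lambda>i. - h i) \<le> r h" if "r \<in> A" "h \<in> U" for r h
  proof -
    have "- r (\<lambda>i. - h i) \<le> r h" using sublin_lower[of r h] that by (auto simp: A_def)
    moreover have "r (\<lambda>i. - h i) \<le> q (\<lambda>i. - h i)" using that neg by (auto simp: A_def)
    ultimately show ?thesis by linarith
  qed
  have ch: "\<exists>u\<in>A. \<forall>a\<in>C. P a u" if C: "C \<in> Chains (relation_of P A)" for C
  proof (cases "C = {}")
    case True
    have "(\<lambda>h. if h \<in> U then q h else 0) \<in> A" using sublin_restrict[OF q] by (auto simp: A_def)
    thus ?thesis using True by blast
  next
    case False
    have CA: "C \<subseteq> A" using C unfolding Chains_def relation_of_def by auto
    have cmp: "P r1 r2 \<or> P r2 r1" if "r1 \<in> C" "r2 \<in> C" for r1 r2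
      using C that unfolding Chains_def relation_of_def by auto
    define R where "R h = (if h \<in> U then Inf ((\<lambda>r. r h) ` C) else 0)" for h
    have bdd: "bdd_below ((\<lambda>r. r h) ` C)" if "h\<in>U" for h
      unfolding bdd_below_def using lowq[OF _ that] CA by blast
    have Rle: "R h \<le> r h" if "r \<in> C" "h \<in> U" for r h
      unfolding R_def using that bdd[OF that(2)] by (auto intro: cInf_lower)
    have Rgr: "y \<le> R h" if "h\<in>U" "\<And>r. r\<in>C \<Longrightarrow> y \<le> r h" for y h
      unfolding R_def using that False by (auto intro: cINF_greatest)
    have sub: "R (\<lambda>i. h1 i + h2 i) \<le> R h1 + R h2" if "h1\<in>U" "h2\<in>U" for h1 h2
    proof -
      have A1: "R (\<lambda>i. h1 i + h2 i) \<le> r1 h1 + r2 h2" if "r1\<in>C" "r2\<in>C" for r1 r2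
      proof -
        have s1: "sublin U r1" "sublin U r2" using that CA by (auto simp: A_def)
        from cmp[OF that] show ?thesis
        proof
          assume "P r1 r2"
          hence "r2 h1 \<le> r1 h1" by (simp add: P_def)
          moreover have "R (\<lambda>i. h1 i + h2 i) \<le> r2 (\<lambda>i. h1 i + h2 i)" using Rle that add \<open>h1\<in>U\<close> \<open>h2\<in>U\<close> by blast
          moreover have "r2 (\<lambda>i. h1 i + h2 i) \<le> r2 h1 + r2 h2" using sublin_addD[OF s1(2)] \<open>h1\<in>U\<close> \<open>h2\<in>U\<close> by blast
          ultimately show ?thesis by linarith
        next
          assume "P r2 r1"
          hence "r1 h2 \<le> r2 h2" by (simp add: P_def)
          moreover have "R (\<lambda>i. h1 i + h2 i) \<le> r1 (\<lambda>i. h1 i + h2 i)" using Rle that add \<open>h1\<in>U\<close> \<open>h2\<in>U\<close> by blast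
          moreover have "r1 (\<lambda>i. h1 i + h2 i) \<le> r1 h1 + r1 h2" using sublin_addD[OF s1(1)] \<open>h1\<in>U\<close> \<open>h2\<in>U\<close> by blast
          ultimately show ?thesis by linarith
        qed
      qed
      have "R (\<lambda>i. h1 i + h2 i) - r2 h2 \<le> R h1" if "r2\<in>C" for r2
        by (rule Rgr[OF \<open>h1\<in>U\<close>]) (use A1 that in force)
      hence "R (\<lambda>i. h1 i + h2 i) - R h1 \<le> R h2"
        by (intro Rgr[OF \<open>h2\<in>U\<close>]) force
      thus ?thesis by simp
    qed
    have hom: "R (\<lambda>i. c * h i) = c * R h" if "c > 0" "h\<in>U" for c h
    proof (rule antisym)
      have hr: "r (\<lambda>i. c * h i) = c * r h" if "r\<in>C" for r
        using that CA \<open>c>0\<close> \<open>h\<in>U\<close> by (auto simp: A_def sublin_def)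
      have "R (\<lambda>i. c * h i) / c \<le> R h"
      proof (rule Rgr[OF \<open>h\<in>U\<close>])
        fix r assume "r\<in>C"
        from Rle[OF this scal[OF \<open>h\<in>U\<close>, of c]] hr[OF this] \<open>c>0\<close>
        show "R (\<lambda>i. c * h i) / c \<le> r h" by (simp add: field_simps)
      qed
      thus "R (\<lambda>i. c * h i) \<le> c * R h" using \<open>c>0\<close> by (simp add: field_simps)
      show "c * R h \<le> R (\<lambda>i. c * h i)"
      proof (rule Rgr[OF scal[OF \<open>h\<in>U\<close>]])
        fix r assume "r\<in>C"
        from Rle[OF this \<open>h\<in>U\<close>] hr[OF this] \<open>c>0\<close>
        show "c * R h \<le> r (\<lambda>i. c * h i)" by simp
      qed
    qed
    obtain r0 where r0: "r0 \<in> C" using False by blast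
    have "R \<in> A"
      unfolding A_def sublin_def
    proof (intro CollectI conjI ballI allI impI)
      show "R h \<le> q h" if "h\<in>U" for h using Rle[OF r0 that] r0 CA that by (force simp: A_def)
    qed (use sub hom R_def in auto)
    moreover have "\<forall>a\<in>C. P a R"
      unfolding P_def using Rle CA by (auto simp: R_def A_def)
    ultimately show ?thesis by blast
  qed
  obtain m where mA: "m \<in> A" and mmin: "\<forall>a\<in>A. P m a \<longrightarrow> a = m"
    using predicate_Zorn[OF po ch] by blast
  have "\<forall>h\<in>U. r h = m h" if "sublin U r" "\<forall>h\<in>U. r h \<le> m h" for r
  proof -
    define r' where "r' h = (if h \<in> U then r h else 0)" for h
    have "r' \<in> A" using sublin_restrict[OF that(1)] that(2) mA
      unfolding r'_def[abs_def] A_def by (force)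
    moreover have "P m r'" using that(2) mA unfolding P_def r'_def A_def by auto
    ultimately have "r' = m" using mmin by blast
    show ?thesis
    proof
      fix h assume "h\<in>U"
      have "r' h = m h" using \<open>r' = m\<close> by simp
      thus "r h = m h" using \<open>h\<in>U\<close> by (simp add: r'_def)
    qed
  qed
  thus ?thesis using mA unfolding A_def by blast
qed

lemma hahn_banach:
  assumes q: "sublin U q"
  shows "\<exists>L. (\<forall>a\<in>U. \<forall>b\<in>U. L (\<lambda>i. a i + b i) = L a + L b) \<and> (\<forall>c. \<forall>a\<in>U. L (\<lambda>i. c * a i) = c * L a)
     \<and> (\<forall>a\<in>U. L a \<le> q a)"
proof -
  obtain m where m: "sublin U m" "\<forall>h\<in>U. m h \<le> q h"
    and mn: "\<And>r. sublin U r \<Longrightarrow> (\<forall>h\<in>U. r h \<le> m h) \<Longrightarrow> (\<forall>h\<in>U. r h = m h)"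
    using exists_minimal[OF q] by blast
  have odd: "m (\<lambda>i. - a i) = - m a" if "a\<in>U" for a using minimal_odd[OF m(1) mn that] by blast
  have addm: "m (\<lambda>i. a i + b i) = m a + m b" if "a\<in>U" "b\<in>U" for a b
  proof -
    have e: "(\<lambda>i. - a i + - b i) = (\<lambda>i. - (a i + b i))" by simp
    have "m (\<lambda>i. - (a i + b i)) \<le> m (\<lambda>i. - a i) + m (\<lambda>i. - b i)"
      using sublin_addD[OF m(1) neg[OF that(1)] neg[OF that(2)]] unfolding e .
    moreover have "m (\<lambda>i. - (a i + b i)) = - m (\<lambda>i. a i + b i)" using odd add that by blast
    ultimately have "- m (\<lambda>i. a i + b i) \<le> - m a - m b" using odd that by simp
    thus ?thesis using sublin_addD[OF m(1) that] by linarith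
  qed
  have homm: "m (\<lambda>i. c * a i) = c * m a" if "a\<in>U" for c a
  proof (cases "c \<ge> 0")
    case True thus ?thesis using sublin_hom0[OF m(1) that] by simp
  next
    case False
    have "m (\<lambda>i. (-c) * (- a i)) = (-c) * m (\<lambda>i. - a i)"
      using sublin_hom0[OF m(1) neg[OF that], of "-c"] False by simp
    thus ?thesis using odd[OF that] by simp
  qed
  show ?thesis by (rule exI[of _ m]) (use addm homm m(2) in blast)
qed

end


definition BB :: "('i \<Rightarrow> real) set" where "BB = {h. \<exists>M. \<forall>i. \<bar>h i\<bar> \<le> M}"
definition pp :: "('i\<Rightarrow>real) \<Rightarrow> real" where "pp h = (SUP i. h i)"

lemma vsub_BB: "vsub BB"
proof
  fix a b :: "'i \<Rightarrow> real" assume "a\<in>BB" "b\<in>BB"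
  then obtain M1 M2 where "\<forall>i. \<bar>a i\<bar> \<le> M1" "\<forall>i. \<bar>b i\<bar> \<le> M2" by (auto simp: BB_def)
  have "\<forall>i. \<bar>a i + b i\<bar> \<le> M1 + M2"
  proof
    fix i show "\<bar>a i + b i\<bar> \<le> M1 + M2"
      using abs_triangle_ineq[of "a i" "b i"] \<open>\<forall>i. \<bar>a i\<bar> \<le> M1\<close> \<open>\<forall>i. \<bar>b i\<bar> \<le> M2\<close> by (smt (verit))
  qed
  thus "(\<lambda>i. a i + b i) \<in> BB" by (auto simp: BB_def)
next
  fix a :: "'i \<Rightarrow> real" and c assume "a\<in>BB"
  then obtain M where M: "\<forall>i. \<bar>a i\<bar> \<le> M" by (auto simp: BB_def)
  have "\<forall>i. \<bar>c * a i\<bar> \<le> \<bar>c\<bar> * M" using M by (simp add: abs_mult mult_left_mono)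
  thus "(\<lambda>i. c * a i) \<in> BB" by (auto simp: BB_def)
next
  show "(\<lambda>_. 0) \<in> (BB :: ('i \<Rightarrow> real) set)" by (auto simp: BB_def)
qed

interpretation BBv: vsub BB by (rule vsub_BB)

lemma pp_upper: "h \<in> BB \<Longrightarrow> h i \<le> pp h"
  unfolding pp_def BB_def
  by (rule cSUP_upper) (auto simp: bdd_above_def abs_le_iff)

lemma pp_least: "(\<And>i. h i \<le> M) \<Longrightarrow> pp h \<le> M"
  unfolding pp_def by (rule cSUP_least) auto

lemma pp_zero: "pp (\<lambda>_::'i. 0) = 0"
proof -
  have "0 \<le> pp (\<lambda>_::'i. 0)" using pp_upper[of "\<lambda>_. 0" undefined] unfolding BB_def by auto
  moreover have "pp (\<lambda>_::'i. 0) \<le> 0" by (rule pp_least) simp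
  ultimately show ?thesis by simp
qed

lemma pp_sublin: "sublin BB pp"
  unfolding sublin_def
proof (intro conjI ballI allI impI)
  fix a b :: "'i\<Rightarrow>real" assume "a\<in>BB" "b\<in>BB"
  show "pp (\<lambda>i. a i + b i) \<le> pp a + pp b"
    by (rule pp_least) (use pp_upper \<open>a\<in>BB\<close> \<open>b\<in>BB\<close> in \<open>meson add_mono\<close>)
next
  fix c :: real and a :: "'i\<Rightarrow>real" assume c: "c > 0" and a: "a \<in> BB"
  show "pp (\<lambda>i. c * a i) = c * pp a"
  proof (rule antisym)
    show "pp (\<lambda>i. c * a i) \<le> c * pp a"
      by (rule pp_least) (use pp_upper[OF a] c in \<open>simp add: mult_left_mono\<close>)
    have "pp a \<le> pp (\<lambda>i. c * a i) / c"
    proof (rule pp_least)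
      fix i
      have "c * a i \<le> pp (\<lambda>i. c * a i)" using pp_upper[OF BBv.scal[OF a, of c]] by simp
      thus "a i \<le> pp (\<lambda>i. c * a i) / c" using c by (simp add: field_simps)
    qed
    thus "c * pp a \<le> pp (\<lambda>i. c * a i)" using c by (simp add: field_simps)
  qed
qed

inductive_set cone :: "('x \<Rightarrow> 'i \<Rightarrow> real) \<Rightarrow> 'x set \<Rightarrow> ('i \<Rightarrow> real) set" for G X where
  cone0: "(\<lambda>_. 0) \<in> cone G X"
| coneS: "c \<in> cone G X \<Longrightarrow> x \<in> X \<Longrightarrow> t \<ge> 0 \<Longrightarrow> (\<lambda>i. c i + t * G x i) \<in> cone G X"

lemma cone_add: "d \<in> cone G X \<Longrightarrow> c \<in> cone G X \<Longrightarrow> (\<lambda>i. c i + d i) \<in> cone G X"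
proof (induction d rule: cone.induct)
  case cone0 thus ?case by simp
next
  case (coneS d x t)
  have "(\<lambda>i. (c i + d i) + t * G x i) \<in> cone G X" using coneS by (intro cone.coneS) auto
  thus ?case by (simp add: add.assoc)
qed

lemma cone_scal: "c \<in> cone G X \<Longrightarrow> s \<ge> 0 \<Longrightarrow> (\<lambda>i. s * c i) \<in> cone G X"
proof (induction c rule: cone.induct)
  case cone0 thus ?case by (simp add: cone.cone0)
next
  case (coneS c x t)
  have "(\<lambda>i. s * c i + (s * t) * G x i) \<in> cone G X" using coneS by (intro cone.coneS) auto
  thus ?case by (simp add: algebra_simps)
qed

lemma cone_BB_aux: assumes GB: "\<And>x. x \<in> X \<Longrightarrow> G x \<in> BB" shows "c \<in> cone G X \<Longrightarrow> c \<in> BB"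
proof (induction c rule: cone.induct)
  case cone0 show ?case by (rule BBv.zero)
next
  case (coneS c x t)
  show ?case by (rule BBv.add[OF coneS.IH BBv.scal[OF GB[OF coneS.hyps(2)]]])
qed

lemma cone_BB: assumes "c \<in> cone G X" "\<And>x. x \<in> X \<Longrightarrow> G x \<in> BB" shows "c \<in> BB"
  using cone_BB_aux[OF assms(2) assms(1)] .

lemma cone_repr: "c \<in> cone G X \<Longrightarrow>
   \<exists>(m::nat) t xs. (\<forall>j<m. 0 \<le> t j \<and> xs j \<in> X) \<and> c = (\<lambda>i. \<Sum>j<m. t j * G (xs j) i)"
proof (induction c rule: cone.induct)
  case cone0
  show ?case by (intro exI[where x="0::nat"]) simp
next
  case (coneS c x t)
  from coneS.IH show ?case
  proof (elim exE conjE)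
    fix m :: nat and tt xs
    assume H1: "\<forall>j<m. 0 \<le> tt j \<and> xs j \<in> X" and H2: "c = (\<lambda>i. \<Sum>j<m. tt j * G (xs j) i)"
    have P1: "\<forall>j<Suc m. 0 \<le> (tt(m:=t)) j \<and> (xs(m:=x)) j \<in> X"
    proof (intro allI impI)
      fix j assume "j < Suc m"
      thus "0 \<le> (tt(m:=t)) j \<and> (xs(m:=x)) j \<in> X" using H1 coneS.hyps by (cases "j = m") auto
    qed
    have S: "(\<Sum>j<m. (tt(m:=t)) j * G ((xs(m:=x)) j) i) = (\<Sum>j<m. tt j * G (xs j) i)" for i
      by (rule sum.cong) auto
    have P2: "(\<lambda>i. c i + t * G x i) = (\<lambda>i. \<Sum>j<Suc m. (tt(m:=t)) j * G ((xs(m:=x)) j) i)"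
      using H2 S by (simp add: fun_eq_iff)
    show "\<exists>(m'::nat) t' xs'. (\<forall>j<m'. 0 \<le> t' j \<and> xs' j \<in> X) \<and> (\<lambda>i. c i + t * G x i) = (\<lambda>i. \<Sum>j<m'. t' j * G (xs' j) i)"
      using P1 P2 by (intro exI[of _ "Suc m"]) blast
  qed
qed

lemma separation:
  assumes GB: "\<And>x. x \<in> X \<Longrightarrow> G x \<in> BB"
    and nn: "\<And>c. c \<in> cone G X \<Longrightarrow> 0 \<le> pp c"
  shows "\<exists>L. (\<forall>a\<in>BB. \<forall>b\<in>BB. L (\<lambda>i. a i + b i) = L a + L b) \<and> (\<forall>c. \<forall>a\<in>BB. L (\<lambda>i. c * a i) = c * L a)
     \<and> (\<forall>a\<in>BB. L a \<le> pp a) \<and> (\<forall>x\<in>X. 0 \<le> L (G x))"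
proof -
  define E where "E h = {pp (\<lambda>i. h i + c i) | c. c \<in> cone G X}" for h
  define q where "q h = Inf (E h)" for h
  have cB: "c \<in> BB" if "c \<in> cone G X" for c using cone_BB[OF that GB] .
  have lb: "- pp (\<lambda>i. - h i) \<le> pp (\<lambda>i. h i + c i)" if "h\<in>BB" "c \<in> cone G X" for h c
  proof -
    have "pp (\<lambda>i. (h i + c i) + - h i) \<le> pp (\<lambda>i. h i + c i) + pp (\<lambda>i. - h i)"
      by (rule BBv.sublin_addD[OF pp_sublin]) (use that cB BBv.add BBv.neg in auto)
    thus ?thesis using nn[OF that(2)] by simp
  qed
  have ne: "E h \<noteq> {}" for h unfolding E_def using cone.cone0 by blast
  have bdd: "bdd_below (E h)" if "h\<in>BB" for h
    unfolding E_def bdd_below_def using lb[OF that] by blast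
  have elem: "q h \<le> pp (\<lambda>i. h i + c i)" if "h\<in>BB" "c \<in> cone G X" for h c
    unfolding q_def by (rule cInf_lower[OF _ bdd[OF that(1)]]) (use that in \<open>auto simp: E_def\<close>)
  have great: "y \<le> q h" if "\<And>c. c \<in> cone G X \<Longrightarrow> y \<le> pp (\<lambda>i. h i + c i)" for h y
    unfolding q_def by (rule cInf_greatest[OF ne]) (use that in \<open>auto simp: E_def\<close>)
  have sub: "q (\<lambda>i. h1 i + h2 i) \<le> q h1 + q h2" if "h1\<in>BB" "h2\<in>BB" for h1 h2
  proof -
    have A: "q (\<lambda>i. h1 i + h2 i) \<le> pp (\<lambda>i. h1 i + c1 i) + pp (\<lambda>i. h2 i + c2 i)"
      if "c1 \<in> cone G X" "c2 \<in> cone G X" for c1 c2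
    proof -
      have "q (\<lambda>i. h1 i + h2 i) \<le> pp (\<lambda>i. (h1 i + h2 i) + (c1 i + c2 i))"
        using elem[OF BBv.add[OF \<open>h1\<in>BB\<close> \<open>h2\<in>BB\<close>] cone_add[OF that(2,1)]] by simp
      moreover have "(\<lambda>i. (h1 i + h2 i) + (c1 i + c2 i)) = (\<lambda>i. (h1 i + c1 i) + (h2 i + c2 i))"
        by (simp add: algebra_simps)
      moreover have "pp (\<lambda>i. (h1 i + c1 i) + (h2 i + c2 i)) \<le> pp (\<lambda>i. h1 i + c1 i) + pp (\<lambda>i. h2 i + c2 i)"
        by (rule BBv.sublin_addD[OF pp_sublin]) (use that cB \<open>h1\<in>BB\<close> \<open>h2\<in>BB\<close> BBv.add in auto)
      ultimately show ?thesis by simp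
    qed
    have "q (\<lambda>i. h1 i + h2 i) - pp (\<lambda>i. h2 i + c2 i) \<le> q h1" if "c2 \<in> cone G X" for c2
    proof (rule great)
      fix c1 assume "c1 \<in> cone G X"
      from A[OF this that] show "q (\<lambda>i. h1 i + h2 i) - pp (\<lambda>i. h2 i + c2 i) \<le> pp (\<lambda>i. h1 i + c1 i)"
        by linarith
    qed
    hence "q (\<lambda>i. h1 i + h2 i) - q h1 \<le> q h2"
    proof (intro great)
      fix c2 assume "c2 \<in> cone G X"
      assume H: "\<And>c2. c2 \<in> cone G X \<Longrightarrow> q (\<lambda>i. h1 i + h2 i) - pp (\<lambda>i. h2 i + c2 i) \<le> q h1"
      from H[OF \<open>c2 \<in> cone G X\<close>] show "q (\<lambda>i. h1 i + h2 i) - q h1 \<le> pp (\<lambda>i. h2 i + c2 i)" by linarith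
    qed
    thus ?thesis by simp
  qed
  have hom: "q (\<lambda>i. s * h i) = s * q h" if "s > 0" "h\<in>BB" for s h
  proof (rule antisym)
    have "q (\<lambda>i. s * h i) / s \<le> q h"
    proof (rule great)
      fix c assume c: "c \<in> cone G X"
      have "q (\<lambda>i. s * h i) \<le> pp (\<lambda>i. s * h i + s * c i)"
        using elem[OF BBv.scal[OF \<open>h\<in>BB\<close>] cone_scal[OF c, of s]] that by simp
      also have "(\<lambda>i. s * h i + s * c i) = (\<lambda>i. s * (h i + c i))" by (simp add: algebra_simps)
      also have "pp (\<lambda>i. s * (h i + c i)) = s * pp (\<lambda>i. h i + c i)"
        by (rule BBv.sublin_hom0[OF pp_sublin BBv.add[OF \<open>h\<in>BB\<close> cB[OF c]]]) (use that in simp)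
      finally show "q (\<lambda>i. s * h i) / s \<le> pp (\<lambda>i. h i + c i)"
        using that by (simp add: field_simps)
    qed
    thus "q (\<lambda>i. s * h i) \<le> s * q h" using that by (simp add: field_simps)
    have "s * q h \<le> q (\<lambda>i. s * h i)"
    proof (rule great)
      fix c assume c: "c \<in> cone G X"
      have c': "(\<lambda>i. (1/s) * c i) \<in> cone G X" using cone_scal[OF c, of "1/s"] that by simp
      have "q h \<le> pp (\<lambda>i. h i + (1/s) * c i)" using elem[OF \<open>h\<in>BB\<close> c'] .
      hence "s * q h \<le> s * pp (\<lambda>i. h i + (1/s) * c i)" using that by simp
      also have "s * pp (\<lambda>i. h i + (1/s) * c i) = pp (\<lambda>i. s * (h i + (1/s) * c i))"
        by (rule BBv.sublin_hom0[OF pp_sublin BBv.add[OF \<open>h\<in>BB\<close> BBv.scal[OF cB[OF c]]], symmetric]) (use that in simp)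
      also have "(\<lambda>i. s * (h i + (1/s) * c i)) = (\<lambda>i. s * h i + c i)" using that by (simp add: distrib_left)
      finally show "s * q h \<le> pp (\<lambda>i. s * h i + c i)" .
    qed
    thus "s * q h \<le> q (\<lambda>i. s * h i)" .
  qed
  have "sublin BB q" unfolding sublin_def using sub hom by blast
  then obtain L where L: "\<forall>a\<in>BB. \<forall>b\<in>BB. L (\<lambda>i. a i + b i) = L a + L b" "\<forall>c. \<forall>a\<in>BB. L (\<lambda>i. c * a i) = c * L a"
    "\<forall>a\<in>BB. L a \<le> q a"
    using BBv.hahn_banach by blast
  have Lp: "L a \<le> pp a" if "a\<in>BB" for a
    using L(3) that elem[OF that cone.cone0] by force
  have LG: "0 \<le> L (G x)" if "x\<in>X" for x
  proof -
    have c1: "(\<lambda>i. 0 + 1 * G x i) \<in> cone G X" by (rule cone.coneS[OF cone.cone0 that]) simp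
    have "L (\<lambda>i. - G x i) \<le> q (\<lambda>i. - G x i)" using L(3) BBv.neg GB that by blast
    also have "\<dots> \<le> pp (\<lambda>i. - G x i + (0 + 1 * G x i))" by (rule elem[OF BBv.neg[OF GB[OF that]] c1])
    also have "\<dots> = 0" using pp_zero by simp
    finally have "L (\<lambda>i. - G x i) \<le> 0" .
    moreover have "L (\<lambda>i. (-1) * G x i) = (-1) * L (G x)" using L(2) GB that by blast
    ultimately show ?thesis by simp
  qed
  show ?thesis using L(1,2) Lp LG by blast
qed

lemma linfty_iff: "g \<in> linfty \<longleftrightarrow> (\<exists>B. \<forall>l. \<bar>g l\<bar> \<le> B)"
  unfolding linfty_def bounded_iff by auto

lemma linfty_add: "g \<in> linfty \<Longrightarrow> h \<in> linfty \<Longrightarrow> (\<lambda>l. g l + h l) \<in> linfty"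
  using BBv.add[of g h] unfolding linfty_iff BB_def by auto

lemma linfty_scal: "g \<in> linfty \<Longrightarrow> (\<lambda>l. c * g l) \<in> linfty"
  using BBv.scal[of g c] unfolding linfty_iff BB_def by auto

lemma linfty_const: "(\<lambda>l. c) \<in> linfty"
  unfolding linfty_iff by auto

lemma pd_D: assumes "\<Phi> \<in> pos_dual"
  shows "(\<forall>g\<in>linfty. \<forall>h\<in>linfty. \<Phi> (\<lambda>l. g l + h l) = \<Phi> g + \<Phi> h)"
    "(\<forall>c. \<forall>g\<in>linfty. \<Phi> (\<lambda>l. c * g l) = c * \<Phi> g)"
    "(\<forall>g\<in>linfty. (\<forall>l. 0 \<le> g l) \<longrightarrow> 0 \<le> \<Phi> g)"
proof -
  from assms have H: "(\<forall>g\<in>linfty. \<forall>h\<in>linfty. \<Phi> (\<lambda>l. g l + h l) = \<Phi> g + \<Phi> h) \<and>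
     (\<forall>c. \<forall>g\<in>linfty. \<Phi> (\<lambda>l. c * g l) = c * \<Phi> g) \<and>
     (\<exists>C. \<forall>g\<in>linfty. \<bar>\<Phi> g\<bar> \<le> C * (SUP l. \<bar>g l\<bar>)) \<and>
     (\<forall>g\<in>linfty. (\<forall>l. 0 \<le> g l) \<longrightarrow> 0 \<le> \<Phi> g)" unfolding pos_dual_def by (rule CollectD)
  show "(\<forall>g\<in>linfty. \<forall>h\<in>linfty. \<Phi> (\<lambda>l. g l + h l) = \<Phi> g + \<Phi> h)" using H by (rule conjunct1)
  show "(\<forall>c. \<forall>g\<in>linfty. \<Phi> (\<lambda>l. c * g l) = c * \<Phi> g)" using H[THEN conjunct2] by (rule conjunct1)
  show "(\<forall>g\<in>linfty. (\<forall>l. 0 \<le> g l) \<longrightarrow> 0 \<le> \<Phi> g)" using H[THEN conjunct2, THEN conjunct2] by (rule conjunct2)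
qed

lemma pd_add: "\<Phi> \<in> pos_dual \<Longrightarrow> g \<in> linfty \<Longrightarrow> h \<in> linfty \<Longrightarrow> \<Phi> (\<lambda>l. g l + h l) = \<Phi> g + \<Phi> h"
  using pd_D(1) by blast

lemma pd_scal: "\<Phi> \<in> pos_dual \<Longrightarrow> g \<in> linfty \<Longrightarrow> \<Phi> (\<lambda>l. c * g l) = c * \<Phi> g"
  using pd_D(2) by blast

lemma pd_pos: "\<Phi> \<in> pos_dual \<Longrightarrow> g \<in> linfty \<Longrightarrow> (\<And>l. 0 \<le> g l) \<Longrightarrow> 0 \<le> \<Phi> g"
  using pd_D(3) by blast

lemma pd_mono: assumes "\<Phi> \<in> pos_dual" "g \<in> linfty" "h \<in> linfty" "\<And>l. g l \<le> h l"
  shows "\<Phi> g \<le> \<Phi> h"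
proof -
  have d: "(\<lambda>l. h l + (-1) * g l) \<in> linfty" using linfty_add linfty_scal assms by blast
  have "\<Phi> (\<lambda>l. g l + (h l + (-1) * g l)) = \<Phi> g + \<Phi> (\<lambda>l. h l + (-1) * g l)"
    using pd_add[OF assms(1,2) d] by simp
  moreover have "(\<lambda>l. g l + (h l + (-1) * g l)) = h" by (simp add: fun_eq_iff)
  moreover have "0 \<le> \<Phi> (\<lambda>l. h l + (-1) * g l)" by (rule pd_pos[OF assms(1) d]) (use assms(4) in simp)
  ultimately show ?thesis by simp
qed

lemma pd_sum:
  fixes m :: nat
  assumes "\<Phi> \<in> pos_dual" "\<forall>j<m. u j \<in> linfty"
  shows "(\<lambda>l. \<Sum>j<m. t j * u j l) \<in> linfty \<and> \<Phi> (\<lambda>l. \<Sum>j<m. t j * u j l) = (\<Sum>j<m. t j * \<Phi> (u j))"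
  using assms(2)
proof (induction m)
  case 0
  have "\<Phi> (\<lambda>l. 0 * (0::real)) = 0 * \<Phi> (\<lambda>l. 0)" by (rule pd_scal[OF assms(1) linfty_const])
  thus ?case using linfty_const[of 0] by simp
next
  case (Suc m)
  have IH: "(\<lambda>l. \<Sum>j<m. t j * u j l) \<in> linfty" "\<Phi> (\<lambda>l. \<Sum>j<m. t j * u j l) = (\<Sum>j<m. t j * \<Phi> (u j))"
    using Suc by auto
  have um: "u m \<in> linfty" using Suc.prems by simp
  have s: "(\<lambda>l. t m * u m l) \<in> linfty" using linfty_scal[OF um] .
  have "(\<lambda>l. \<Sum>j<Suc m. t j * u j l) = (\<lambda>l. (\<Sum>j<m. t j * u j l) + t m * u m l)" by simp
  moreover have "(\<lambda>l. (\<Sum>j<m. t j * u j l) + t m * u m l) \<in> linfty" using linfty_add[OF IH(1) s] .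
  moreover have "\<Phi> (\<lambda>l. (\<Sum>j<m. t j * u j l) + t m * u m l) = (\<Sum>j<Suc m. t j * \<Phi> (u j))"
    using pd_add[OF assms(1) IH(1) s] IH(2) pd_scal[OF assms(1) um] by simp
  ultimately show ?case by simp
qed

theorem theorem4p5:
  fixes X :: "'x set" and f :: "'x \<Rightarrow> real" and F :: "'l \<Rightarrow> 'x \<Rightarrow> real" and x0 :: 'x
  assumes "X \<noteq> {}"
    and "feasible_set X F \<noteq> {}"
    and "x0 \<in> feasible_set X F"
    and "\<forall>x\<in>feasible_set X F. f x0 \<le> f x"
    and "\<forall>x\<in>X. (\<lambda>l. F l x) \<in> linfty"
  shows "(\<exists>\<rho> \<Phi>. \<rho> \<ge> 0 \<and> \<Phi> \<in> pos_dual \<and> \<rho> + \<Phi> (\<lambda>_. 1) = 1 \<and>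
            (\<forall>x\<in>X. \<rho> * f x0 + \<Phi> (\<lambda>l. F l x0) \<le> \<rho> * f x + \<Phi> (\<lambda>l. F l x)) \<and>
            \<Phi> (\<lambda>l. F l x0) = 0)
         \<longleftrightarrow> infsup_convex X UNIV (ext_family F f x0)"
proof -
  have x0X: "x0 \<in> X" using assms(3) by (simp add: feasible_set_def)
  have bddF: "bdd_above (range (\<lambda>l. F l x))" if "x \<in> X" for x
  proof -
    have "\<exists>B. \<forall>l. \<bar>F l x\<bar> \<le> B" using assms(5) that by (simp add: linfty_iff)
    then obtain B where "\<forall>l. \<bar>F l x\<bar> \<le> B" ..
    hence "\<forall>l. F l x \<le> B" by (simp add: abs_le_iff)
    thus ?thesis by (intro bdd_aboveI[of _ B]) auto
  qed
  have Fx0: "F l x0 \<le> 0" for l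
  proof -
    have "F l x0 \<le> (SUP l. F l x0)" by (rule cSUP_upper[OF _ bddF[OF x0X]]) simp
    also have "\<dots> \<le> 0" using assms(3) by (simp add: feasible_set_def)
    finally show ?thesis .
  qed
  define g where "g x = (\<lambda>i. ext_family F f x0 i x)" for x
  have gN: "g x None = f x - f x0" and gS: "g x (Some l) = F l x" for x l
    by (simp_all add: g_def ext_family_def)
  show ?thesis
  proof
    assume "\<exists>\<rho> \<Phi>. \<rho> \<ge> 0 \<and> \<Phi> \<in> pos_dual \<and> \<rho> + \<Phi> (\<lambda>_. 1) = 1 \<and>
            (\<forall>x\<in>X. \<rho> * f x0 + \<Phi> (\<lambda>l. F l x0) \<le> \<rho> * f x + \<Phi> (\<lambda>l. F l x)) \<and>
            \<Phi> (\<lambda>l. F l x0) = 0"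
    then obtain \<rho> \<Phi> where r0: "\<rho> \<ge> 0" and pd: "\<Phi> \<in> pos_dual" and r1: "\<rho> + \<Phi> (\<lambda>_. 1) = 1"
      and mn: "\<forall>x\<in>X. \<rho> * f x0 + \<Phi> (\<lambda>l. F l x0) \<le> \<rho> * f x + \<Phi> (\<lambda>l. F l x)"
      and z: "\<Phi> (\<lambda>l. F l x0) = 0" by blast
    show "infsup_convex X UNIV (ext_family F f x0)"
      unfolding infsup_convex_def
    proof (intro allI impI, elim conjE)
      fix m :: nat and t :: "nat \<Rightarrow> real" and xs :: "nat \<Rightarrow> 'x"
      assume m1: "1 \<le> m" and t0: "\<forall>j<m. 0 \<le> t j" and t1: "(\<Sum>j<m. t j) = 1" and xsX: "\<forall>j<m. xs j \<in> X"
      define s where "s i = (\<Sum>j<m. t j * ext_family F f x0 i (xs j))" for i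
      have "(INF x\<in>X. SUP i\<in>UNIV. ereal (ext_family F f x0 i x)) \<le> (SUP i\<in>UNIV. ereal (ext_family F f x0 i x0))"
        by (rule INF_lower[OF x0X])
      also have "\<dots> \<le> 0"
      proof (rule SUP_least)
        fix i :: "'l option"
        show "ereal (ext_family F f x0 i x0) \<le> 0"
          using Fx0 by (cases i) (auto simp: ext_family_def)
      qed
      also have "0 \<le> (SUP i\<in>UNIV. ereal (s i))"
      proof (rule ccontr)
        assume "\<not> 0 \<le> (SUP i\<in>UNIV. ereal (s i))"
        hence lt: "(SUP i\<in>UNIV. ereal (s i)) < 0" by simp
        have ge: "ereal (s None) \<le> (SUP i\<in>UNIV. ereal (s i))" by (rule SUP_upper) simp
        define M where "M = real_of_ereal (SUP i\<in>UNIV. ereal (s i))"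
        have SM: "(SUP i\<in>UNIV. ereal (s i)) = ereal M"
          unfolding M_def using lt ge by (cases "(SUP i\<in>UNIV. ereal (s i))") auto
        have M0: "M < 0" using lt SM by simp
        have sM: "s i \<le> M" for i
        proof -
          have "ereal (s i) \<le> (SUP i\<in>UNIV. ereal (s i))" by (rule SUP_upper) simp
          thus ?thesis using SM by simp
        qed
        define u where "u j = (\<lambda>l. F l (xs j))" for j
        have uL: "\<forall>j<m. u j \<in> linfty" using xsX assms(5) by (simp add: u_def)
        note PS = pd_sum[OF pd uL, of t]
        have sS: "(\<lambda>l. s (Some l)) = (\<lambda>l. \<Sum>j<m. t j * u j l)"
          by (simp add: s_def u_def ext_family_def)
        have "\<Phi> (\<lambda>l. \<Sum>j<m. t j * u j l) \<le> \<Phi> (\<lambda>l. M * 1)"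
        proof (rule pd_mono[OF pd])
          show "(\<lambda>l. \<Sum>j<m. t j * u j l) \<in> linfty" using PS by (rule conjunct1)
          show "(\<lambda>l. M * 1) \<in> linfty" by (rule linfty_const)
          fix l
          have "s (Some l) = (\<Sum>j<m. t j * u j l)" using fun_cong[OF sS, of l] by simp
          thus "(\<Sum>j<m. t j * u j l) \<le> M * 1" using sM[of "Some l"] by simp
        qed
        also have "\<dots> = M * \<Phi> (\<lambda>_. 1)" by (rule pd_scal[OF pd linfty_const])
        finally have A: "(\<Sum>j<m. t j * \<Phi> (u j)) \<le> M * \<Phi> (\<lambda>_. 1)" using PS by simp
        have "0 \<le> (\<Sum>j<m. t j * (\<rho> * (f (xs j) - f x0) + \<Phi> (u j)))"
        proof (rule sum_nonneg)
          fix j assume "j \<in> {..<m}"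
          hence "0 \<le> t j" "\<rho> * f x0 + \<Phi> (\<lambda>l. F l x0) \<le> \<rho> * f (xs j) + \<Phi> (u j)"
            using t0 mn xsX by (auto simp: u_def)
          hence "0 \<le> \<rho> * (f (xs j) - f x0) + \<Phi> (u j)"
            using z by (simp add: right_diff_distrib)
          thus "0 \<le> t j * (\<rho> * (f (xs j) - f x0) + \<Phi> (u j))"
            using \<open>0 \<le> t j\<close> by (rule mult_nonneg_nonneg[rotated])
        qed
        also have "\<dots> = \<rho> * s None + (\<Sum>j<m. t j * \<Phi> (u j))"
        proof -
          have e: "t j * (\<rho> * (f (xs j) - f x0) + \<Phi> (u j)) = \<rho> * (t j * ext_family F f x0 None (xs j)) + t j * \<Phi> (u j)" for j
            by (simp add: ext_family_def algebra_simps)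
          show ?thesis unfolding e sum.distrib s_def sum_distrib_left ..
        qed
        also have "\<dots> \<le> \<rho> * M + M * \<Phi> (\<lambda>_. 1)"
          using A mult_left_mono[OF sM[of None] r0] by linarith
        also have "\<dots> = M" using r1 by (simp add: algebra_simps) (metis distrib_left mult.commute mult.right_neutral)
        finally show False using M0 by simp
      qed
      finally show "(INF x\<in>X. SUP i\<in>UNIV. ereal (ext_family F f x0 i x)) \<le> (SUP i\<in>UNIV. ereal (s i))" .
    qed
  next
    assume isc: "infsup_convex X UNIV (ext_family F f x0)"
    have GB: "g x \<in> BB" if "x \<in> X" for x
    proof -
      have "\<exists>B. \<forall>l. \<bar>F l x\<bar> \<le> B" using assms(5) that by (simp add: linfty_iff)
      then obtain B where B: "\<forall>l. \<bar>F l x\<bar> \<le> B" ..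
      have "\<forall>i. \<bar>g x i\<bar> \<le> max B \<bar>f x - f x0\<bar>"
      proof
        fix i show "\<bar>g x i\<bar> \<le> max B \<bar>f x - f x0\<bar>"
        proof (cases i)
          case None thus ?thesis by (simp add: gN)
        next
          case (Some l)
          have "\<bar>F l x\<bar> \<le> B" using B by blast
          thus ?thesis using Some by (simp add: gS)
        qed
      qed
      thus ?thesis by (auto simp: BB_def)
    qed
    have LHS: "0 \<le> (INF x\<in>X. SUP i\<in>UNIV. ereal (ext_family F f x0 i x))"
    proof (rule INF_greatest)
      fix x assume xX: "x \<in> X"
      show "0 \<le> (SUP i\<in>UNIV. ereal (ext_family F f x0 i x))"
      proof (cases "x \<in> feasible_set X F")
        case True
        hence "0 \<le> ereal (ext_family F f x0 None x)" using assms(4) by (simp add: ext_family_def)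
        thus ?thesis by (rule SUP_upper2[rotated]) simp
      next
        case False
        hence "0 < (SUP l. F l x)" using xX by (auto simp: feasible_set_def)
        then obtain l where "0 < F l x" using less_cSUP_iff[OF _ bddF[OF xX]] by auto
        hence "0 \<le> ereal (ext_family F f x0 (Some l) x)" by (simp add: ext_family_def)
        thus ?thesis by (rule SUP_upper2[rotated]) simp
      qed
    qed
    have Iu: "\<forall>m::nat. \<forall>t::nat \<Rightarrow> real. \<forall>xs::nat \<Rightarrow> 'x.
        m \<ge> 1 \<and> (\<forall>j<m. 0 \<le> t j) \<and> (\<Sum>j<m. t j) = 1 \<and> (\<forall>j<m. xs j \<in> X) \<longrightarrow>
        (INF x\<in>X. SUP i\<in>UNIV. ereal (ext_family F f x0 i x)) \<le> (SUP i\<in>UNIV. ereal (\<Sum>j<m. t j * ext_family F f x0 i (xs j)))"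
      using isc unfolding infsup_convex_def .
    have nn: "0 \<le> pp c" if c: "c \<in> cone g X" for c
      using cone_repr[OF c]
    proof (elim exE conjE)
      fix m :: nat and t :: "nat \<Rightarrow> real" and xs :: "nat \<Rightarrow> 'x"
      assume H: "\<forall>j<m. 0 \<le> t j \<and> xs j \<in> X" and ceq: "c = (\<lambda>i. \<Sum>j<m. t j * g (xs j) i)"
      have cB: "c \<in> BB" using cone_BB[OF c GB] .
      define T where "T = (\<Sum>j<m. t j)"
      have tnn: "\<forall>j<m. 0 \<le> t j" and xsX: "\<forall>j<m. xs j \<in> X" using H by simp_all
      have T0: "0 \<le> T" unfolding T_def by (rule sum_nonneg) (use tnn in simp)
      show ?thesis
      proof (cases "T = 0")
        case True
        have "\<forall>j\<in>{..<m}. t j = 0"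
          using True unfolding T_def by (subst sum_nonneg_eq_0_iff[symmetric]) (use tnn in auto)
        hence "c = (\<lambda>_. 0)" unfolding ceq by (simp add: fun_eq_iff)
        thus ?thesis by (simp add: pp_zero)
      next
        case False
        hence Tp: "T > 0" using T0 by simp
        have m1: "1 \<le> m" using False unfolding T_def by (cases m) auto
        define tt where "tt j = t j / T" for j
        have tt1: "(\<Sum>j<m. tt j) = 1" unfolding tt_def using Tp by (simp add: T_def sum_divide_distrib[symmetric])
        have tt0: "\<forall>j<m. 0 \<le> tt j" unfolding tt_def using tnn Tp by simp
        have "(INF x\<in>X. SUP i\<in>UNIV. ereal (ext_family F f x0 i x)) \<le>
              (SUP i\<in>UNIV. ereal (\<Sum>j<m. tt j * ext_family F f x0 i (xs j)))"
          using Iu[rule_format, OF conjI[OF m1 conjI[OF tt0 conjI[OF tt1 xsX]]]] .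
        also have "(\<lambda>i. \<Sum>j<m. tt j * ext_family F f x0 i (xs j)) = (\<lambda>i. c i / T)"
          by (simp add: ceq g_def tt_def sum_divide_distrib)
        finally have S0: "0 \<le> (SUP i\<in>UNIV. ereal (c i / T))" using LHS by (rule order_trans[rotated])
        show ?thesis
        proof (rule ccontr)
          assume "\<not> 0 \<le> pp c"
          have "(SUP i\<in>UNIV. ereal (c i / T)) \<le> ereal (pp c / T)"
          proof (rule SUP_least)
            fix i show "ereal (c i / T) \<le> ereal (pp c / T)"
              using pp_upper[OF cB, of i] Tp by (simp add: divide_right_mono)
          qed
          moreover have "pp c / T < 0" using \<open>\<not> 0 \<le> pp c\<close> Tp by (simp add: divide_neg_pos)
          ultimately have "(SUP i\<in>UNIV. ereal (c i / T)) < 0" by (simp add: le_less_trans)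
          thus False using S0 by simp
        qed
      qed
    qed
    have "\<exists>L. (\<forall>a\<in>BB. \<forall>b\<in>BB. L (\<lambda>i. a i + b i) = L a + L b) \<and> (\<forall>c. \<forall>a\<in>BB. L (\<lambda>i. c * a i) = c * L a)
     \<and> (\<forall>a\<in>BB. L a \<le> pp a) \<and> (\<forall>x\<in>X. 0 \<le> L (g x))"
      by (rule separation[of X g, OF GB nn])
    then obtain L where LL: "(\<forall>a\<in>BB. \<forall>b\<in>BB. L (\<lambda>i. a i + b i) = L a + L b) \<and> (\<forall>c. \<forall>a\<in>BB. L (\<lambda>i. c * a i) = c * L a)
     \<and> (\<forall>a\<in>BB. L a \<le> pp a) \<and> (\<forall>x\<in>X. 0 \<le> L (g x))" ..
    have L1: "\<forall>a\<in>BB. \<forall>b\<in>BB. L (\<lambda>i. a i + b i) = L a + L b" using LL by (rule conjunct1)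
    have L2: "\<forall>c. \<forall>a\<in>BB. L (\<lambda>i. c * a i) = c * L a" using LL[THEN conjunct2] by (rule conjunct1)
    have L3: "\<forall>a\<in>BB. L a \<le> pp a" using LL[THEN conjunct2, THEN conjunct2] by (rule conjunct1)
    have L4: "\<forall>x\<in>X. 0 \<le> L (g x)" using LL[THEN conjunct2, THEN conjunct2] by (rule conjunct2)
    have Lle: "L h \<le> M" if "h \<in> BB" "\<And>i. h i \<le> M" for h M
    proof -
      have "L h \<le> pp h" using L3 that(1) by (rule bspec)
      also have "pp h \<le> M" by (rule pp_least) (rule that(2))
      finally show ?thesis .
    qed
    have Lneg: "L (\<lambda>i. - h i) = - L h" if "h \<in> BB" for h
    proof -
      have "L (\<lambda>i. (-1) * h i) = (-1) * L h" using L2 that by blast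
      thus ?thesis by simp
    qed
    have Lpos: "0 \<le> L h" if "h \<in> BB" "\<And>i. 0 \<le> h i" for h
      using Lle[OF BBv.neg[OF that(1)], of 0] that Lneg[OF that(1)] by simp
    define e :: "'l option \<Rightarrow> real" where "e i = (case i of None \<Rightarrow> 1 | Some _ \<Rightarrow> 0)" for i
    define ext :: "('l \<Rightarrow> real) \<Rightarrow> 'l option \<Rightarrow> real" where
      "ext \<phi> i = (case i of None \<Rightarrow> 0 | Some l \<Rightarrow> \<phi> l)" for \<phi> i
    have eB: "e \<in> BB" unfolding BB_def e_def by (intro CollectI exI[of _ 1]) (auto split: option.split)
    have extB: "ext \<phi> \<in> BB" if "\<phi> \<in> linfty" for \<phi>
    proof -
      have "\<exists>B. \<forall>l. \<bar>\<phi> l\<bar> \<le> B" using that by (simp add: linfty_iff)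
      then obtain B where B: "\<forall>l. \<bar>\<phi> l\<bar> \<le> B" ..
      have "\<forall>i. \<bar>ext \<phi> i\<bar> \<le> B"
      proof
        fix i show "\<bar>ext \<phi> i\<bar> \<le> B"
        proof (cases i)
          case None
          have "\<bar>\<phi> undefined\<bar> \<le> B" using B by (rule spec)
          thus ?thesis using None by (simp add: ext_def)
        next
          case (Some l)
          have "\<bar>\<phi> l\<bar> \<le> B" using B by (rule spec)
          thus ?thesis using Some by (simp add: ext_def)
        qed
      qed
      thus ?thesis by (auto simp: BB_def)
    qed
    define \<rho> where "\<rho> = L e"
    define \<Phi> where "\<Phi> \<phi> = L (ext \<phi>)" for \<phi>
    have r0: "\<rho> \<ge> 0" unfolding \<rho>_def by (rule Lpos[OF eB]) (auto simp: e_def split: option.split)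
    have one: "L (\<lambda>_. 1) = 1"
    proof -
      have oB: "(\<lambda>_. 1::real) \<in> (BB :: ('l option \<Rightarrow> real) set)" by (auto simp: BB_def)
      have "L (\<lambda>_. 1) \<le> 1" by (rule Lle[OF oB]) simp
      moreover have "L (\<lambda>i. - 1) \<le> -1" by (rule Lle[OF BBv.neg[OF oB]]) simp
      ultimately show ?thesis using Lneg[OF oB] by simp
    qed
    have r1: "\<rho> + \<Phi> (\<lambda>_. 1) = 1"
    proof -
      have "\<rho> + \<Phi> (\<lambda>_. 1) = L (\<lambda>i. e i + ext (\<lambda>_. 1) i)"
        unfolding \<rho>_def \<Phi>_def using L1 eB extB[OF linfty_const] by simp
      also have "(\<lambda>i. e i + ext (\<lambda>_. 1) i) = (\<lambda>_. 1)"
        by (auto simp: fun_eq_iff e_def ext_def split: option.split)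
      finally show ?thesis using one by simp
    qed
    have pd: "\<Phi> \<in> pos_dual"
      unfolding pos_dual_def
    proof (intro CollectI conjI ballI allI impI)
      fix \<phi> \<psi> :: "'l \<Rightarrow> real" assume "\<phi> \<in> linfty" "\<psi> \<in> linfty"
      have "ext (\<lambda>l. \<phi> l + \<psi> l) = (\<lambda>i. ext \<phi> i + ext \<psi> i)"
        by (auto simp: fun_eq_iff ext_def split: option.split)
      thus "\<Phi> (\<lambda>l. \<phi> l + \<psi> l) = \<Phi> \<phi> + \<Phi> \<psi>"
        unfolding \<Phi>_def using L1 extB \<open>\<phi> \<in> linfty\<close> \<open>\<psi> \<in> linfty\<close> by simp
    next
      fix c :: real and \<phi> :: "'l \<Rightarrow> real" assume "\<phi> \<in> linfty"
      have "ext (\<lambda>l. c * \<phi> l) = (\<lambda>i. c * ext \<phi> i)"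
        by (auto simp: fun_eq_iff ext_def split: option.split)
      thus "\<Phi> (\<lambda>l. c * \<phi> l) = c * \<Phi> \<phi>"
        unfolding \<Phi>_def using L2 extB \<open>\<phi> \<in> linfty\<close> by simp
    next
      fix \<phi> :: "'l \<Rightarrow> real" assume "\<phi> \<in> linfty" "\<forall>l. 0 \<le> \<phi> l"
      thus "0 \<le> \<Phi> \<phi>" unfolding \<Phi>_def
        by (intro Lpos extB) (auto simp: ext_def split: option.split)
    next
      show "\<exists>C. \<forall>\<phi>\<in>linfty. \<bar>\<Phi> \<phi>\<bar> \<le> C * (SUP l. \<bar>\<phi> l\<bar>)"
      proof (intro exI[of _ 1] ballI)
        fix \<phi> :: "'l \<Rightarrow> real" assume ph: "\<phi> \<in> linfty"
        define S where "S = (SUP l. \<bar>\<phi> l\<bar>)"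
        have bd: "bdd_above (range (\<lambda>l. \<bar>\<phi> l\<bar>))" using ph unfolding linfty_iff bdd_above_def by auto
        have Su: "\<bar>\<phi> l\<bar> \<le> S" for l unfolding S_def by (rule cSUP_upper[OF _ bd]) simp
        have Sb: "\<bar>ext \<phi> i\<bar> \<le> S" for i
        proof (cases i)
          case None thus ?thesis using Su[of undefined] by (simp add: ext_def)
        next
          case (Some l) thus ?thesis using Su[of l] by (simp add: ext_def)
        qed
        have "L (ext \<phi>) \<le> S" by (rule Lle[OF extB[OF ph]]) (use Sb in \<open>simp add: abs_le_iff\<close>)
        moreover have "L (\<lambda>i. - ext \<phi> i) \<le> S" by (rule Lle[OF BBv.neg[OF extB[OF ph]]]) (use Sb in \<open>simp add: abs_le_iff\<close>)
        ultimately show "\<bar>\<Phi> \<phi>\<bar> \<le> 1 * (SUP l. \<bar>\<phi> l\<bar>)"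
          unfolding \<Phi>_def S_def[symmetric] using Lneg[OF extB[OF ph]] by simp
      qed
    qed
    have Fl: "(\<lambda>l. F l x) \<in> linfty" if "x\<in>X" for x using assms(5) that by blast
    have gdec: "g x = (\<lambda>i. (f x - f x0) * e i + ext (\<lambda>l. F l x) i)" for x
      by (auto simp: fun_eq_iff g_def ext_family_def e_def ext_def split: option.split)
    have Lg: "L (g x) = (f x - f x0) * \<rho> + \<Phi> (\<lambda>l. F l x)" if "x\<in>X" for x
      unfolding gdec \<rho>_def \<Phi>_def using L1 L2 BBv.scal[OF eB] eB extB[OF Fl[OF that]] by simp
    have z1: "\<Phi> (\<lambda>l. F l x0) \<le> 0" unfolding \<Phi>_def
      by (rule Lle[OF extB[OF Fl[OF x0X]]]) (auto simp: ext_def Fx0 split: option.split)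
    have "0 \<le> L (g x0)" using L4 x0X by (rule bspec)
    hence z2: "0 \<le> \<Phi> (\<lambda>l. F l x0)" using Lg[OF x0X] by simp
    have mn: "\<forall>x\<in>X. \<rho> * f x0 + \<Phi> (\<lambda>l. F l x0) \<le> \<rho> * f x + \<Phi> (\<lambda>l. F l x)"
    proof
      fix x assume "x\<in>X"
      hence "0 \<le> (f x - f x0) * \<rho> + \<Phi> (\<lambda>l. F l x)" using L4 Lg by metis
      thus "\<rho> * f x0 + \<Phi> (\<lambda>l. F l x0) \<le> \<rho> * f x + \<Phi> (\<lambda>l. F l x)"
        using z1 by (simp add: algebra_simps)
    qed
    show "\<exists>\<rho> \<Phi>. \<rho> \<ge> 0 \<and> \<Phi> \<in> pos_dual \<and> \<rho> + \<Phi> (\<lambda>_. 1) = 1 \<and>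
            (\<forall>x\<in>X. \<rho> * f x0 + \<Phi> (\<lambda>l. F l x0) \<le> \<rho> * f x + \<Phi> (\<lambda>l. F l x)) \<and>
            \<Phi> (\<lambda>l. F l x0) = 0"
      using r0 pd r1 mn z1 z2 by (intro exI[of _ \<rho>] exI[of _ \<Phi>]) auto
  qed
qed
end
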